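(* Let $u$ be a word of length $n\ge1$ and let $\mathsf{C}[1..n]$ be its cover array. Then $$\mathrm{lseed}(u)=\min\{\mathsf{C}[j] : \mathrm{per}(u)\le j\le n\}.$$
   Context: Positions in $u$ are numbered $1,\dots,n$; $u[i..j]=u_i\cdots u_j$. For a nonempty word $x$, $\mathrm{per}(x)$ is the smallest positive integer $p$ with $x_i=x_{i+p}$ for all $1\le i\le|x|-p$. A word $s$ covers $w$ if every position of $w$ lies in some occurrence of $s$ in $w$. $\mathrm{cover}(x)$ is the length of the shortest word covering $x$, and the cover array is $\mathsf{C}[i]=\mathrm{cover}(u[1..i])$. A seed of $u$ is a factor $s$ of $u$ such that $u$ is a factor of some word covered by $s$; a left seed is a seed that is a prefix of $u$; $\mathrm{lseed}(u)$ is the length of the shortest left seed of $u$. *)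

theory Defs
  imports Main "HOL-Library.Sublist"
begin

(* Words are lists; the paper's position i (1-based) is list index i-1. *)

definition per :: "'a list \<Rightarrow> nat" where
  "per x = (LEAST p. 0 < p \<and> (\<forall>i. i + p < length x \<longrightarrow> x ! i = x ! (i + p)))"

definition occ_at :: "'a list \<Rightarrow> 'a list \<Rightarrow> nat \<Rightarrow> bool" where
  "occ_at s w i \<longleftrightarrow> i + length s \<le> length w \<and> take (length s) (drop i w) = s"

definition covers :: "'a list \<Rightarrow> 'a list \<Rightarrow> bool" where
  "covers s w \<longleftrightarrow> (\<forall>p < length w. \<exists>i. occ_at s w i \<and> i \<le> p \<and> p < i + length s)"

definition cover :: "'a list \<Rightarrow> nat" where
  "cover x = (LEAST m. \<exists>s. length s = m \<and> covers s x)"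

definition cover_array :: "'a list \<Rightarrow> nat \<Rightarrow> nat" where
  "cover_array u i = cover (take i u)"

definition seed :: "'a list \<Rightarrow> 'a list \<Rightarrow> bool" where
  "seed s u \<longleftrightarrow> sublist s u \<and> (\<exists>w. covers s w \<and> sublist u w)"

definition left_seed :: "'a list \<Rightarrow> 'a list \<Rightarrow> bool" where
  "left_seed s u \<longleftrightarrow> seed s u \<and> prefix s u"

definition lseed :: "'a list \<Rightarrow> nat" where
  "lseed u = (LEAST m. \<exists>s. length s = m \<and> left_seed s u)"

end

theory Submission imports Defs begin
lemma occ_nth: "occ_at s w i \<longleftrightarrow> i + length s \<le> length w \<and> (\<forall>r<length s. w!(i+r) = s!r)"
  unfolding occ_at_def by (auto simp: list_eq_iff_nth_eq)

lemma cover_le: "covers s x \<Longrightarrow> cover x \<le> length s"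
  unfolding cover_def by (rule Least_le) blast

lemma covers_self: "covers x x"
  unfolding covers_def by (auto simp: occ_at_def intro!: exI[of _ 0])

lemma cover_ex: "\<exists>s. length s = cover x \<and> covers s x"
  unfolding cover_def by (rule LeastI_ex) (use covers_self in blast)

lemma per_props:
  assumes "1 \<le> length u"
  shows "0 < per u \<and> per u \<le> length u \<and> (\<forall>i. i + per u < length u \<longrightarrow> u!i = u!(i + per u))"
proof -
  have ex: "0 < length u \<and> (\<forall>i. i + length u < length u \<longrightarrow> u!i = u!(i + length u))" using assms by auto
  let ?P = "\<lambda>p. 0 < p \<and> (\<forall>i. i + p < length u \<longrightarrow> u!i = u!(i + p))"
  have "?P (Least ?P)" by (rule LeastI[of ?P], rule ex)
  moreover have "Least ?P \<le> length u" by (rule Least_le[of ?P], rule ex)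
  ultimately show ?thesis unfolding per_def by blast
qed

lemma per_min: "0 < q \<Longrightarrow> (\<forall>i. i + q < length u \<longrightarrow> u!i = u!(i+q)) \<Longrightarrow> per u \<le> q"
  unfolding per_def by (rule Least_le) blast

lemma per_mod:
  assumes "\<forall>i. i + p < length u \<longrightarrow> u!i = u!(i+p)" "0 < p"
  shows "i < length u \<Longrightarrow> u!i = u!(i mod p)"
proof (induction i rule: less_induct)
  case (less i)
  show ?case
  proof (cases "i < p")
    case True then show ?thesis by simp
  next
    case False
    then have "u!(i-p) = u!i" using assms(1) less.prems by (metis le_add_diff_inverse2 not_less)
    moreover have "(i-p) mod p = i mod p" using False by (simp add: le_mod_geq)
    moreover have "u!(i-p) = u!((i-p) mod p)" using less.IH[of "i-p"] less.prems False assms(2) by auto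
    ultimately show ?thesis by simp
  qed
qed

lemma covers_prefix:
  assumes "covers s v" "v \<noteq> []"
  shows "prefix s v"
proof -
  obtain i where "occ_at s v i" "i \<le> 0" using assms unfolding covers_def by auto
  then have "take (length s) v = s" "length s \<le> length v" unfolding occ_at_def by auto
  then show ?thesis by (metis take_is_prefix)
qed

lemma left_seed_of_cover:
  assumes n1: "1 \<le> length u" and pj: "per u \<le> j" and jn: "j \<le> length u" and cv: "covers s (take j u)"
  shows "left_seed s u"
proof -
  define p where "p = per u"
  define n where "n = length u"
  define v where "v = take j u"
  have pp: "0 < p" "p \<le> n" "\<forall>i. i + p < length u \<longrightarrow> u!i = u!(i + p)"
    using per_props[OF n1] unfolding p_def n_def by auto
  have umod: "\<And>i. i < n \<Longrightarrow> u!i = u!(i mod p)" using per_mod[OF pp(3) pp(1)] n_def by blast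
  have "v \<noteq> []" using pj pp jn unfolding v_def p_def n_def by auto
  then have pre: "prefix s v" using covers_prefix cv v_def by blast
  then have pu: "prefix s u" unfolding v_def by (metis prefix_order.dual_order.trans take_is_prefix)
  define L where "L = n * p + j"
  define w where "w = map (\<lambda>i. u!(i mod p)) [0..<L]"
  have lw: "length w = L" unfolding w_def by simp
  have wn: "\<And>i. i < L \<Longrightarrow> w!i = u!(i mod p)" unfolding w_def by simp
  have "n * 1 \<le> n * p" using pp(1) by (intro mult_le_mono2) simp
  then have nL: "n \<le> L" unfolding L_def by linarith
  have "take n w = u"
  proof (rule nth_equalityI)
    show "length (take n w) = length u" using nL lw n_def by simp
    fix i assume "i < length (take n w)"
    then have i: "i < n" by simp
    then have "take n w ! i = w ! i" by simp
    also have "\<dots> = u ! (i mod p)" using wn i nL by simp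
    also have "\<dots> = u ! i" using umod i by simp
    finally show "take n w ! i = u ! i" .
  qed
  then have "prefix u w" by (metis take_is_prefix)
  then have sub: "sublist u w" by (rule prefix_imp_sublist)
  have cw: "covers s w"
    unfolding covers_def
  proof (intro allI impI)
    fix q assume q: "q < length w"
    define k where "k = min (q div p) n"
    have "k * p \<le> q div p * p" unfolding k_def by (intro mult_le_mono1) simp
    moreover have "q div p * p \<le> q" using div_mult_mod_eq[of q p] by linarith
    ultimately have kq: "k * p \<le> q" by linarith
    have qk: "q < k * p + j"
    proof (cases "q div p \<le> n")
      case True
      then have "k = q div p" unfolding k_def by simp
      moreover have "q < q div p * p + p" using pp(1) div_mult_mod_eq[of q p] mod_less_divisor[of p q] by linarith
      ultimately show ?thesis using pj p_def by simp
    next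
      case False then have "k = n" unfolding k_def by simp
      then show ?thesis using q lw L_def by simp
    qed
    have kn: "k \<le> n" unfolding k_def by simp
    define t where "t = q - k * p"
    have tj: "t < j" using kq qk t_def by linarith
    have "t < length v" using tj jn v_def n_def by simp
    then obtain i where oi: "occ_at s v i" "i \<le> t" "t < i + length s" using cv v_def unfolding covers_def by blast
    have ij: "i + length s \<le> j" using oi(1) jn unfolding occ_nth v_def by simp
    have sv: "\<And>r. r < length s \<Longrightarrow> s!r = u!(i+r)" using oi(1) ij unfolding occ_nth v_def by auto
    have "occ_at s w (k*p + i)"
      unfolding occ_nth
    proof (intro conjI allI impI)
      have "k * p + j \<le> L" unfolding L_def using kn by simp
      then show "k * p + i + length s \<le> length w" using ij lw by simp
    next
      fix r assume r: "r < length s"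
      have "k * p \<le> n * p" using kn by (rule mult_le_mono1)
      then have lt: "k * p + i + r < L" unfolding L_def using ij r by linarith
      have "w ! (k*p+i+r) = u!((k*p+i+r) mod p)" using wn lt by simp
      also have "(k*p+i+r) mod p = (i+r) mod p" by (metis add.assoc mod_mult_self3)
      also have "u!((i+r) mod p) = u!(i+r)" using umod ij r jn n_def by simp
      finally show "w ! (k * p + i + r) = s ! r" using sv r by simp
    qed
    moreover have "k*p+i \<le> q" "q < k*p+i+length s" using oi kq t_def by auto
    ultimately show "\<exists>i. occ_at s w i \<and> i \<le> q \<and> q < i + length s" by blast
  qed
  show ?thesis unfolding left_seed_def seed_def using pu cw sub prefix_imp_sublist by blast
qed

lemma cover_le_of_left_seed:
  assumes n1: "1 \<le> length u" and ls: "left_seed s u"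
  shows "\<exists>j. per u \<le> j \<and> j \<le> length u \<and> cover (take j u) \<le> length s"
proof -
  define n where "n = length u"
  define m where "m = length s"
  obtain w where cw: "covers s w" and sw: "sublist u w" and pu: "prefix s u"
    using ls unfolding left_seed_def seed_def by blast
  obtain a b where wab: "w = a @ u @ b" using sw unfolding sublist_def by blast
  define k where "k = length a"
  have wu: "\<And>x. x < n \<Longrightarrow> w!(k+x) = u!x" unfolding wab k_def n_def by (simp add: nth_append)
  have lw: "k + n \<le> length w" unfolding wab k_def n_def by simp
  have mn: "m \<le> n" using pu unfolding m_def n_def by (rule prefix_length_le)
  have tm: "take m u = s" using pu unfolding m_def by (metis append_eq_conv_conj prefix_def)
  have su: "\<And>x. x < m \<Longrightarrow> s!x = u!x" using tm by (metis nth_take)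
  define Js where "Js = {j. j \<le> n \<and> covers s (take j u)}"
  have fin: "finite Js" unfolding Js_def by simp
  have mJ: "m \<in> Js" unfolding Js_def using mn tm covers_self by simp
  define J where "J = Max Js"
  have JJ: "J \<in> Js" unfolding J_def using fin mJ by (metis Max_in empty_iff)
  have JM: "\<And>j. j \<in> Js \<Longrightarrow> j \<le> J" unfolding J_def using fin by simp
  have Jn: "J \<le> n" and cJ: "covers s (take J u)" using JJ unfolding Js_def by auto
  have mleJ: "m \<le> J" using JM mJ by simp
  show ?thesis
  proof (cases "per u \<le> J")
    case True then show ?thesis using Jn cJ cover_le n_def by blast
  next
    case False
    then have Jp: "J < per u" by simp
    have pn: "per u \<le> n" using per_props[OF n1] n_def by simp
    then have Jlt: "J < n" using Jp by simp
    then have "k + J < length w" using lw by simp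
    then obtain i' where oi: "occ_at s w i'" "i' \<le> k + J" "k + J < i' + m"
      using cw unfolding covers_def m_def by blast
    have ki: "k < i'" using oi(3) mleJ by linarith
    define i where "i = i' - k"
    have i0: "0 < i" "i \<le> J" using ki oi(2) i_def by auto
    have ii: "i' = k + i" using ki i_def by simp
    have wsr: "\<And>r. r < m \<Longrightarrow> w!(k+i+r) = s!r" using oi(1) ii unfolding occ_nth m_def by auto
    show ?thesis
    proof (cases "i + m \<le> n")
      case True
      have oiu: "occ_at s u i" unfolding occ_nth
      proof (intro conjI allI impI)
        show "i + length s \<le> length u" using True m_def n_def by simp
        fix r assume r: "r < length s"
        have "u!(i+r) = w!(k+(i+r))" using wu True r m_def by simp
        then show "u!(i+r) = s!r" using wsr r m_def by (simp add: add.assoc)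
      qed
      have "covers s (take (i+m) u)"
        unfolding covers_def
      proof (intro allI impI)
        fix q assume q: "q < length (take (i+m) u)"
        then have q': "q < i + m" by simp
        show "\<exists>i2. occ_at s (take (i+m) u) i2 \<and> i2 \<le> q \<and> q < i2 + length s"
        proof (cases "q < J")
          case True
          then have "q < length (take J u)" using Jn n_def by simp
          then obtain i2 where o2: "occ_at s (take J u) i2" "i2 \<le> q" "q < i2 + length s"
            using cJ unfolding covers_def by blast
          have "occ_at s (take (i+m) u) i2" using o2(1) oi(3) True Jn unfolding occ_nth m_def n_def ii
            by auto
          then show ?thesis using o2 by blast
        next
          case False
          have "occ_at s (take (i+m) u) i" using oiu True unfolding occ_nth m_def n_def by auto
          then show ?thesis using False q' i0 m_def by auto
        qed
      qed
      then have "i + m \<in> Js" using True Js_def by simp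
      then have "i + m \<le> J" using JM by simp
      then show ?thesis using oi(3) ii by simp
    next
      case False
      have "\<forall>x. x + i < length u \<longrightarrow> u!x = u!(x+i)"
      proof (intro allI impI)
        fix x assume x: "x + i < length u"
        then have xm: "x < m" using False n_def by simp
        have "u!(x+i) = w!(k+(x+i))" using wu x n_def by simp
        also have "\<dots> = w!(k+i+x)" by (simp add: ac_simps)
        also have "\<dots> = s!x" using wsr xm by simp
        also have "\<dots> = u!x" using su xm by simp
        finally show "u!x = u!(x+i)" by simp
      qed
      then have "per u \<le> i" using per_min i0 by blast
      then show ?thesis using Jp i0 by simp
    qed
  qed
qed

theorem lemma2:
  fixes u :: "'a list"
  assumes "1 \<le> length u"
  shows "lseed u = Min {cover_array u j | j. per u \<le> j \<and> j \<le> length u}"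
proof -
  define S where "S = {cover_array u j | j. per u \<le> j \<and> j \<le> length u}"
  have Seq: "S = (\<lambda>j. cover (take j u)) ` {per u..length u}"
    unfolding S_def cover_array_def by auto
  have fin: "finite S" using Seq by simp
  have ne: "S \<noteq> {}" using Seq per_props[OF assms] by auto
  have ex: "\<exists>s. length s = lseed u \<and> left_seed s u"
    unfolding lseed_def
    by (rule LeastI_ex) (use covers_self in \<open>auto simp: left_seed_def seed_def\<close>)
  have le1: "lseed u \<le> Min S"
  proof -
    have "Min S \<in> S" using fin ne by simp
    then obtain j where j: "per u \<le> j" "j \<le> length u" "Min S = cover (take j u)"
      using Seq by auto
    obtain s where s: "length s = cover (take j u)" "covers s (take j u)" using cover_ex by blast
    have "left_seed s u" using left_seed_of_cover[OF assms j(1) j(2) s(2)] .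
    then have "lseed u \<le> length s" unfolding lseed_def by (intro Least_le) blast
    then show ?thesis using s j by simp
  qed
  have le2: "Min S \<le> lseed u"
  proof -
    obtain s where s: "length s = lseed u" "left_seed s u" using ex by blast
    obtain j where j: "per u \<le> j" "j \<le> length u" "cover (take j u) \<le> length s"
      using cover_le_of_left_seed[OF assms s(2)] by blast
    have "cover (take j u) \<in> S" using Seq j by auto
    then have "Min S \<le> cover (take j u)" using fin by simp
    then show ?thesis using j s by simp
  qed
  show ?thesis using le1 le2 S_def by simp
qed

end
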